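(* Let $\gamma_1,\ldots,\gamma_m\in\mathbb R^{m-n}$ be such that $L=\mathbb Z\langle\gamma_1,\ldots,\gamma_m\rangle$ is a lattice of rank $m-n$, let $\delta\in\mathbb R^{m-n}$, and let $$\mathcal Z_{\Gamma,\delta}=\Bigl\{\mathbf z\in\mathbb C^m\colon\sum_{k=1}^m\gamma_{jk}|z_k|^2=\delta_j,\ 1\le j\le m-n\Bigr\},$$ on which the torus $T_\Gamma=\{(e^{2\pi i\langle\gamma_1,\varphi\rangle},\ldots,e^{2\pi i\langle\gamma_m,\varphi\rangle})\colon\varphi\in\mathbb R^{m-n}\}\cong\mathbb R^{m-n}/L^*$ acts coordinatewise. Then the stabiliser subgroup of $\mathbf z\in\mathcal Z_{\Gamma,\delta}$ under the action of $T_\Gamma$ is $L^*_{\mathbf z}/L^*$. Furthermore, if $\mathcal Z_{\Gamma,\delta}$ is nondegenerate, then all these stabilisers are finite, i.e. the action of $T_\Gamma$ on $\mathcal Z_{\Gamma,\delta}$ is almost free.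
   Context: Here $\gamma_{jk}$ denotes the $j$th coordinate of $\gamma_k$. For a subgroup $M\subset\mathbb R^{m-n}$, $M^*=\{\lambda^*\in\mathbb R^{m-n}\colon\langle\lambda^*,\lambda\rangle\in\mathbb Z\text{ for all }\lambda\in M\}$; $L_{\mathbf z}=\mathbb Z\langle\gamma_i\colon z_i\ne0\rangle\subset L$, so $L^*\subset L^*_{\mathbf z}$ and $L^*_{\mathbf z}/L^*\subset\mathbb R^{m-n}/L^*=T_\Gamma$. Nondegenerate means the gradients of the $m-n$ defining functions are linearly independent at every point of $\mathcal Z_{\Gamma,\delta}$. *)

theory Defs
  imports "HOL-Analysis.Analysis"
begin

text \<open>Coordinates of C^m are indexed by a finite type 'm (so m = CARD('m)),
  and R^(m-n) is real^'d (so m - n = CARD('d)).  The family gamma assigns to each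
  k the vector gamma_k in R^(m-n); its j-th coordinate gamma_jk is gamma k $ j.\<close>

definition zspan :: "('i \<Rightarrow> 'a::real_vector) \<Rightarrow> 'i set \<Rightarrow> 'a set" where
  "zspan g I = {\<Sum>i\<in>I. real_of_int (c i) *\<^sub>R g i | c. True}"

definition is_lattice_of_rank :: "'a::euclidean_space set \<Rightarrow> nat \<Rightarrow> bool" where
  "is_lattice_of_rank L r \<longleftrightarrow>
     0 \<in> L \<and> (\<forall>x\<in>L. \<forall>y\<in>L. x - y \<in> L) \<and>
     (\<exists>e>0. \<forall>x\<in>L. x \<noteq> 0 \<longrightarrow> e \<le> norm x) \<and> dim L = r"

definition dual_group :: "'a::real_inner set \<Rightarrow> 'a set" where
  "dual_group M = {l. \<forall>x\<in>M. l \<bullet> x \<in> \<int>}"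

definition LL :: "('m::finite \<Rightarrow> real^'d) \<Rightarrow> (real^'d) set" where
  "LL \<gamma> = zspan \<gamma> UNIV"

definition LLz :: "('m::finite \<Rightarrow> real^'d) \<Rightarrow> complex^'m \<Rightarrow> (real^'d) set" where
  "LLz \<gamma> z = zspan \<gamma> {i. z $ i \<noteq> 0}"

definition ZZ :: "('m::finite \<Rightarrow> real^'d) \<Rightarrow> real^'d \<Rightarrow> (complex^'m) set" where
  "ZZ \<gamma> \<delta> = {z. \<forall>j. (\<Sum>k\<in>UNIV. (\<gamma> k) $ j * (cmod (z $ k))\<^sup>2) = \<delta> $ j}"

definition torus_elt :: "('m::finite \<Rightarrow> real^'d) \<Rightarrow> real^'d \<Rightarrow> complex^'m" where
  "torus_elt \<gamma> \<phi> = (\<chi> k. exp (2 * of_real pi * \<i> * of_real (\<gamma> k \<bullet> \<phi>)))"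

definition torus :: "('m::finite \<Rightarrow> real^'d) \<Rightarrow> (complex^'m) set" where
  "torus \<gamma> = range (torus_elt \<gamma>)"

definition torus_act :: "complex^'m \<Rightarrow> complex^'m \<Rightarrow> complex^'m" where
  "torus_act t z = (\<chi> k. t $ k * z $ k)"

definition stabiliser :: "('m::finite \<Rightarrow> real^'d) \<Rightarrow> complex^'m \<Rightarrow> (complex^'m) set" where
  "stabiliser \<gamma> z = {t \<in> torus \<gamma>. torus_act t z = z}"

definition nondegenerate :: "('m::finite \<Rightarrow> real^'d) \<Rightarrow> real^'d \<Rightarrow> bool" where
  "nondegenerate \<gamma> \<delta> \<longleftrightarrow>
    (\<forall>z\<in>ZZ \<gamma> \<delta>. \<exists>g :: 'd \<Rightarrow> complex^'m.
       (\<forall>j. ((\<lambda>w. \<Sum>k\<in>UNIV. (\<gamma> k) $ j * (cmod (w $ k))\<^sup>2) has_derivative (\<lambda>h. g j \<bullet> h)) (at z)) \<and>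
       (\<forall>c::'d \<Rightarrow> real. (\<Sum>j\<in>UNIV. c j *\<^sub>R g j) = 0 \<longrightarrow> (\<forall>j. c j = 0)))"

end

theory Submission
  imports Defs
begin

lemma exp_2pi_eq_1_iff: "exp (2 * of_real pi * \<i> * of_real x) = 1 \<longleftrightarrow> x \<in> \<int>"
proof -
  have "exp (2 * of_real pi * \<i> * of_real x) = 1 \<longleftrightarrow> (\<exists>n::int. 2 * pi * x = of_int (2*n) * pi)"
    by (simp add: exp_eq_1)
  also have "\<dots> \<longleftrightarrow> (\<exists>n::int. x = of_int n)"
    by (auto simp: algebra_simps)
  also have "\<dots> \<longleftrightarrow> x \<in> \<int>" by (auto elim: Ints_cases)
  finally show ?thesis .
qed

lemma zspan_gen: "i \<in> I \<Longrightarrow> finite I \<Longrightarrow> g i \<in> zspan g I"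
  unfolding zspan_def
  apply (rule CollectI, rule exI[of _ "\<lambda>j. if j = i then 1 else 0"])
  by (simp add: sum.delta if_distrib[of "\<lambda>a. real_of_int a *\<^sub>R _"] cong: if_cong)

lemma zspan_0: "0 \<in> zspan g I"
  unfolding zspan_def by (auto intro!: exI[of _ "\<lambda>_. 0"])

lemma zspan_diff: "x \<in> zspan g I \<Longrightarrow> y \<in> zspan g I \<Longrightarrow> x - y \<in> zspan g I"
  unfolding zspan_def
  apply clarify
  subgoal for c d
    by (intro exI[of _ "\<lambda>i. c i - d i"]) (simp add: sum_subtractf algebra_simps)
  done

lemma zspan_add: "x \<in> zspan g I \<Longrightarrow> y \<in> zspan g I \<Longrightarrow> x + y \<in> zspan g I"
  using zspan_diff[of 0 g I y] zspan_diff[of x g I "-y"] zspan_0 by fastforce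

lemma zspan_smult: "x \<in> zspan g I \<Longrightarrow> of_int n *\<^sub>R x \<in> zspan g I"
  unfolding zspan_def
  apply clarify
  subgoal for c
    by (intro exI[of _ "\<lambda>i. n * c i"]) (simp add: scaleR_sum_right)
  done

lemma zspan_sum: "finite A \<Longrightarrow> (\<And>a. a \<in> A \<Longrightarrow> f a \<in> zspan g I) \<Longrightarrow> sum f A \<in> zspan g I"
  by (induction A rule: finite_induct) (auto intro: zspan_add zspan_0)

lemma dual_zspan: "finite I \<Longrightarrow> \<phi> \<in> dual_group (zspan g I) \<longleftrightarrow> (\<forall>i\<in>I. \<phi> \<bullet> g i \<in> \<int>)"
  unfolding dual_group_def
proof safe
  fix i assume a: "finite I" and b: "\<forall>x\<in>zspan g I. \<phi> \<bullet> x \<in> \<int>" and c: "i \<in> I"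
  show "\<phi> \<bullet> g i \<in> \<int>" using b zspan_gen[OF c a] by (rule bspec)
next
  fix x assume "\<forall>i\<in>I. \<phi> \<bullet> g i \<in> \<int>" "x \<in> zspan g I"
  note h = this
  from h(2) obtain c where x: "x = (\<Sum>i\<in>I. real_of_int (c i) *\<^sub>R g i)"
    unfolding zspan_def by blast
  have "\<phi> \<bullet> x = (\<Sum>i\<in>I. real_of_int (c i) * (\<phi> \<bullet> g i))"
    unfolding x by (simp only: inner_sum_right inner_scaleR_right)
  also have "\<dots> \<in> \<int>"
    by (intro Ints_sum Ints_mult Ints_of_int) (use h(1) in blast)
  finally show "\<phi> \<bullet> x \<in> \<int>" .
qed

lemma torus_elt_nth: "torus_elt \<gamma> \<phi> $ k = 1 \<longleftrightarrow> \<phi> \<bullet> \<gamma> k \<in> \<int>"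
  unfolding torus_elt_def by (simp only: vec_lambda_beta exp_2pi_eq_1_iff inner_commute[of "\<gamma> k" \<phi>])

lemma act_iff:
  fixes \<gamma> :: "'m::finite \<Rightarrow> real^'d"
  shows "torus_act (torus_elt \<gamma> \<phi>) z = z \<longleftrightarrow> \<phi> \<in> dual_group (LLz \<gamma> z)"
proof -
  have "torus_act (torus_elt \<gamma> \<phi>) z = z \<longleftrightarrow> (\<forall>k. z $ k \<noteq> 0 \<longrightarrow> torus_elt \<gamma> \<phi> $ k = 1)"
    unfolding torus_act_def vec_eq_iff by auto
  also have "\<dots> \<longleftrightarrow> \<phi> \<in> dual_group (LLz \<gamma> z)"
    unfolding LLz_def by (subst dual_zspan) (auto simp: torus_elt_nth)
  finally show ?thesis .
qed

lemma triv_iff: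
  fixes \<gamma> :: "'m::finite \<Rightarrow> real^'d"
  shows "torus_elt \<gamma> \<phi> = (\<chi> k. 1) \<longleftrightarrow> \<phi> \<in> dual_group (LL \<gamma>)"
  unfolding LL_def vec_eq_iff by (subst dual_zspan) (auto simp: torus_elt_nth)

lemma stab_eq:
  fixes \<gamma> :: "'m::finite \<Rightarrow> real^'d"
  shows "stabiliser \<gamma> z = torus_elt \<gamma> ` dual_group (LLz \<gamma> z)"
    and "{\<phi>. torus_elt \<gamma> \<phi> \<in> stabiliser \<gamma> z} = dual_group (LLz \<gamma> z)"
  unfolding stabiliser_def torus_def using act_iff[of \<gamma> _ z] by auto

lemma deriv_f:
  fixes \<gamma> :: "'m::finite \<Rightarrow> real^'d" and z :: "complex^'m"
  shows "((\<lambda>w. \<Sum>k\<in>UNIV. (\<gamma> k) $ j * (cmod (w $ k))\<^sup>2) has_derivative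
     (\<lambda>h. \<Sum>k\<in>UNIV. (\<gamma> k) $ j * (2 * ((z $ k) \<bullet> (h $ k))))) (at z)"
proof -
  have e: "\<And>w::complex^'m. (\<Sum>k\<in>UNIV. (\<gamma> k) $ j * (cmod (w $ k))\<^sup>2)
     = (\<Sum>k\<in>UNIV. (\<gamma> k) $ j * ((w $ k) \<bullet> (w $ k)))"
    by (simp only: power2_norm_eq_inner)
  have d: "((\<lambda>w::complex^'m. w $ k) has_derivative (\<lambda>h. h $ k)) (at z)" for k
    by (rule bounded_linear_imp_has_derivative) (rule bounded_linear_vec_nth)
  have D: "((\<lambda>w. \<Sum>k\<in>UNIV. (\<gamma> k) $ j * ((w $ k) \<bullet> (w $ k))) has_derivative
     (\<lambda>h. \<Sum>k\<in>UNIV. (\<gamma> k) $ j * ((z $ k) \<bullet> (h $ k) + (h $ k) \<bullet> (z $ k)))) (at z)"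
  proof (rule has_derivative_sum)
    fix k :: 'm
    show "((\<lambda>w. (\<gamma> k) $ j * ((w $ k) \<bullet> (w $ k))) has_derivative
       (\<lambda>h. (\<gamma> k) $ j * ((z $ k) \<bullet> (h $ k) + (h $ k) \<bullet> (z $ k)))) (at z)"
      by (rule has_derivative_mult_right, rule has_derivative_inner[OF d d])
  qed
  have eq: "(z $ k) \<bullet> (h $ k) + (h $ k) \<bullet> (z $ k) = 2 * ((z $ k) \<bullet> (h $ k))" for h :: "complex^'m" and k
    by (subst inner_commute[of "h $ k"]) simp
  from D show ?thesis unfolding e eq .
qed

lemma nondeg_indep:
  fixes \<gamma> :: "'m::finite \<Rightarrow> real^'d"
  assumes nd: "nondegenerate \<gamma> \<delta>" and z: "z \<in> ZZ \<gamma> \<delta>"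
    and c: "\<forall>k. z $ k \<noteq> 0 \<longrightarrow> cv \<bullet> \<gamma> k = 0"
  shows "cv = 0"
proof -
  have ex: "\<exists>g :: 'd \<Rightarrow> complex^'m.
       (\<forall>j. ((\<lambda>w. \<Sum>k\<in>UNIV. (\<gamma> k) $ j * (cmod (w $ k))\<^sup>2) has_derivative (\<lambda>h. g j \<bullet> h)) (at z)) \<and>
       (\<forall>c::'d \<Rightarrow> real. (\<Sum>j\<in>UNIV. c j *\<^sub>R g j) = 0 \<longrightarrow> (\<forall>j. c j = 0))"
    using nd z unfolding nondegenerate_def by (rule bspec)
  then obtain g :: "'d \<Rightarrow> complex^'m" where
    g0: "\<forall>j. ((\<lambda>w. \<Sum>k\<in>UNIV. (\<gamma> k) $ j * (cmod (w $ k))\<^sup>2) has_derivative (\<lambda>h. g j \<bullet> h)) (at z)"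
    and li0: "\<forall>c::'d \<Rightarrow> real. (\<Sum>j\<in>UNIV. c j *\<^sub>R g j) = 0 \<longrightarrow> (\<forall>j. c j = 0)"
    by (elim exE conjE)
  have g: "((\<lambda>w. \<Sum>k\<in>UNIV. (\<gamma> k) $ j * (cmod (w $ k))\<^sup>2) has_derivative (\<lambda>h. g j \<bullet> h)) (at z)" for j
    using g0 by (rule spec)
  have li: "(\<Sum>j\<in>UNIV. c j *\<^sub>R g j) = 0 \<Longrightarrow> (\<forall>j. c j = 0)" for c :: "'d \<Rightarrow> real"
    using li0 by blast
  have gh: "g j \<bullet> h = (\<Sum>k\<in>UNIV. (\<gamma> k) $ j * (2 * ((z $ k) \<bullet> (h $ k))))" for j h
    using fun_cong[OF has_derivative_unique[OF g[of j] deriv_f[of \<gamma> j z]], of h] by (simp only:)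
  define v where "v = (\<Sum>j\<in>UNIV. (cv $ j) *\<^sub>R g j)"
  have "v \<bullet> h = 0" for h
  proof -
    have "v \<bullet> h = (\<Sum>j\<in>UNIV. cv $ j * (\<Sum>k\<in>UNIV. (\<gamma> k) $ j * (2 * ((z $ k) \<bullet> (h $ k)))))"
      unfolding v_def by (simp only: inner_sum_left inner_scaleR_left gh)
    also have "\<dots> = (\<Sum>k\<in>UNIV. (cv \<bullet> \<gamma> k) * (2 * ((z $ k) \<bullet> (h $ k))))"
    proof -
      have "(\<Sum>j\<in>UNIV. cv $ j * (\<Sum>k\<in>UNIV. (\<gamma> k) $ j * (2 * ((z $ k) \<bullet> (h $ k)))))
          = (\<Sum>j\<in>UNIV. \<Sum>k\<in>UNIV. cv $ j * ((\<gamma> k) $ j * (2 * ((z $ k) \<bullet> (h $ k)))))"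
        by (simp only: sum_distrib_left)
      also have "\<dots> = (\<Sum>k\<in>UNIV. \<Sum>j\<in>UNIV. cv $ j * ((\<gamma> k) $ j * (2 * ((z $ k) \<bullet> (h $ k)))))"
        by (rule sum.swap)
      also have "\<dots> = (\<Sum>k\<in>UNIV. (\<Sum>j\<in>UNIV. cv $ j * (\<gamma> k) $ j) * (2 * ((z $ k) \<bullet> (h $ k))))"
        by (simp only: sum_distrib_right mult.assoc)
      also have "\<dots> = (\<Sum>k\<in>UNIV. (cv \<bullet> \<gamma> k) * (2 * ((z $ k) \<bullet> (h $ k))))"
        by (simp only: inner_vec_def inner_real_def)
      finally show ?thesis .
    qed
    also have "\<dots> = 0"
    proof (intro sum.neutral ballI)
      fix k :: 'm
      show "(cv \<bullet> \<gamma> k) * (2 * ((z $ k) \<bullet> (h $ k))) = 0"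
        by (cases "z $ k = 0") (simp_all add: c)
    qed
    finally show ?thesis .
  qed
  then have "v \<bullet> v = 0" .
  then have "v = 0" by simp
  then have "(\<Sum>j\<in>UNIV. (cv $ j) *\<^sub>R g j) = 0" by (simp only: v_def)
  from li[OF this] have "\<forall>j. cv $ j = 0" .
  then show ?thesis by (simp add: vec_eq_iff)
qed

lemma span_full:
  fixes \<gamma> :: "'m::finite \<Rightarrow> real^'d"
  assumes sp: "\<forall>c. (\<forall>k\<in>S. c \<bullet> \<gamma> k = 0) \<longrightarrow> c = 0"
  shows "span (\<gamma> ` S) = UNIV"
proof (rule ccontr)
  assume "span (\<gamma> ` S) \<noteq> UNIV"
  from span_not_UNIV_orthogonal[OF this] obtain a where a: "a \<noteq> 0" "\<forall>x\<in>span (\<gamma> ` S). a \<bullet> x = 0"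
    by blast
  have "\<forall>k\<in>S. a \<bullet> \<gamma> k = 0"
  proof
    fix k assume "k \<in> S"
    then have "\<gamma> k \<in> span (\<gamma> ` S)" by (intro span_base imageI)
    with a(2) show "a \<bullet> \<gamma> k = 0" by (rule bspec)
  qed
  with sp a(1) show False by blast
qed

lemma real_comb:
  fixes \<gamma> :: "'m::finite \<Rightarrow> real^'d"
  assumes sp: "\<forall>c. (\<forall>k\<in>S. c \<bullet> \<gamma> k = 0) \<longrightarrow> c = 0"
  shows "\<exists>a. \<gamma> k = (\<Sum>s\<in>S. a s *\<^sub>R \<gamma> s)"
proof -
  define T where "T = {(\<Sum>s\<in>S. a s *\<^sub>R \<gamma> s) | a. True}"
  have sub: "subspace T"
    unfolding subspace_def
  proof (intro conjI ballI allI)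
    show "0 \<in> T" unfolding T_def by (auto intro!: exI[of _ "\<lambda>_. 0"])
  next
    fix x y assume "x \<in> T" "y \<in> T"
    then obtain a b where "x = (\<Sum>s\<in>S. a s *\<^sub>R \<gamma> s)" "y = (\<Sum>s\<in>S. b s *\<^sub>R \<gamma> s)"
      unfolding T_def by blast
    then have e: "x + y = (\<Sum>s\<in>S. (a s + b s) *\<^sub>R \<gamma> s)"
      by (simp only: scaleR_add_left sum.distrib)
    show "x + y \<in> T" unfolding T_def
      by (rule CollectI, rule exI[of _ "\<lambda>s. a s + b s"], simp only: e simp_thms)
  next
    fix c :: real and x assume "x \<in> T"
    then obtain a where "x = (\<Sum>s\<in>S. a s *\<^sub>R \<gamma> s)"
      unfolding T_def by blast
    then have e: "c *\<^sub>R x = (\<Sum>s\<in>S. (c * a s) *\<^sub>R \<gamma> s)"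
      by (simp only: scaleR_sum_right scaleR_scaleR)
    show "c *\<^sub>R x \<in> T" unfolding T_def
      by (rule CollectI, rule exI[of _ "\<lambda>s. c * a s"], simp only: e simp_thms)
  qed
  have "\<gamma> ` S \<subseteq> T"
  proof
    fix x assume "x \<in> \<gamma> ` S"
    then obtain i where i: "i \<in> S" "x = \<gamma> i" by blast
    have e: "\<gamma> i = (\<Sum>s\<in>S. (if s = i then 1 else 0) *\<^sub>R \<gamma> s)"
      using i(1) by (simp add: if_distrib[of "\<lambda>a. a *\<^sub>R _"] sum.delta cong: if_cong)
    show "x \<in> T" unfolding T_def i(2)
      by (rule CollectI, rule exI[of _ "\<lambda>s. if s = i then 1 else 0"], simp only: e[symmetric] simp_thms)
  qed
  from span_minimal[OF this sub] have "UNIV \<subseteq> T" unfolding span_full[OF sp] .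
  then have "\<gamma> k \<in> T" by blast
  then show ?thesis unfolding T_def by blast
qed

lemma rat_multiple:
  fixes \<gamma> :: "'m::finite \<Rightarrow> real^'d"
  assumes lat: "is_lattice_of_rank (LL \<gamma>) CARD('d)"
    and sp: "\<forall>c. (\<forall>k\<in>S. c \<bullet> \<gamma> k = 0) \<longrightarrow> c = 0"
  shows "\<exists>N>0. of_nat N *\<^sub>R \<gamma> k \<in> zspan \<gamma> S"
proof -
  obtain e where e: "e > 0" "\<forall>x\<in>LL \<gamma>. x \<noteq> 0 \<longrightarrow> e \<le> norm x"
    using lat unfolding is_lattice_of_rank_def by blast
  obtain a where a: "\<gamma> k = (\<Sum>s\<in>S. a s *\<^sub>R \<gamma> s)"
    using real_comb[OF sp] by blast
  define q where "q n = real n *\<^sub>R \<gamma> k - (\<Sum>s\<in>S. real_of_int \<lfloor>real n * a s\<rfloor> *\<^sub>R \<gamma> s)" for n :: nat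
  define p where "p n = (\<Sum>s\<in>S. (real n * a s - real_of_int \<lfloor>real n * a s\<rfloor>) *\<^sub>R \<gamma> s)" for n :: nat
  have pq: "p n = q n" for n
  proof -
    have "p n = (\<Sum>s\<in>S. (real n * a s) *\<^sub>R \<gamma> s) - (\<Sum>s\<in>S. real_of_int \<lfloor>real n * a s\<rfloor> *\<^sub>R \<gamma> s)"
      unfolding p_def by (simp only: scaleR_diff_left sum_subtractf)
    also have "(\<Sum>s\<in>S. (real n * a s) *\<^sub>R \<gamma> s) = real n *\<^sub>R \<gamma> k"
      unfolding a by (simp only: scaleR_sum_right scaleR_scaleR)
    finally show ?thesis unfolding q_def .
  qed
  have fin: "finite A" for A :: "'m set" by simp
  have qL: "q n \<in> LL \<gamma>" for n
  proof -
    have 1: "real n *\<^sub>R \<gamma> k \<in> LL \<gamma>"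
      using zspan_smult[OF zspan_gen[where i=k and g=\<gamma> and I=UNIV, OF UNIV_I fin], where n="int n"] unfolding LL_def by simp
    have 2: "(\<Sum>s\<in>S. real_of_int \<lfloor>real n * a s\<rfloor> *\<^sub>R \<gamma> s) \<in> LL \<gamma>"
      unfolding LL_def by (intro zspan_sum fin zspan_smult zspan_gen UNIV_I)
    show ?thesis unfolding q_def using zspan_diff[OF 1[unfolded LL_def] 2[unfolded LL_def]]
      unfolding LL_def .
  qed
  define B where "B = (\<Sum>s\<in>S. norm (\<gamma> s))"
  have pB: "p n \<in> cball 0 B" for n
  proof -
    have "norm (p n) \<le> (\<Sum>s\<in>S. norm ((real n * a s - real_of_int \<lfloor>real n * a s\<rfloor>) *\<^sub>R \<gamma> s))"
      unfolding p_def by (rule norm_sum)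
    also have "\<dots> \<le> B" unfolding B_def
    proof (rule sum_mono)
      fix s
      have "\<bar>real n * a s - real_of_int \<lfloor>real n * a s\<rfloor>\<bar> \<le> 1"
        using floor_correct[of "real n * a s"] by linarith
      then show "norm ((real n * a s - real_of_int \<lfloor>real n * a s\<rfloor>) *\<^sub>R \<gamma> s) \<le> norm (\<gamma> s)"
        unfolding norm_scaleR by (rule mult_left_le_one_le[OF norm_ge_zero abs_ge_zero])
    qed
    finally show ?thesis by (simp only: mem_cball_0)
  qed
  have "seq_compact (cball (0::real^'d) B)"
    by (rule compact_imp_seq_compact) simp
  then obtain l r where r: "strict_mono (r :: nat \<Rightarrow> nat)" "(p \<circ> r) \<longlonglongrightarrow> l"
    using pB by (metis seq_compactE)
  from CauchyD[OF LIMSEQ_imp_Cauchy[OF r(2)] e(1)] obtain M where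
    M: "\<forall>m\<ge>M. \<forall>n\<ge>M. norm ((p \<circ> r) m - (p \<circ> r) n) < e" by blast
  define n1 where "n1 = r M"
  define n2 where "n2 = r (Suc M)"
  have n12: "n1 < n2" unfolding n1_def n2_def using r(1) by (simp add: strict_mono_def)
  have small: "norm (p n2 - p n1) < e" using M unfolding n1_def n2_def by force
  have inL: "p n2 - p n1 \<in> LL \<gamma>" unfolding pq LL_def using qL unfolding LL_def
    by (intro zspan_diff) auto
  have eq0: "p n2 - p n1 = 0"
    using e(2) inL small by force
  have E: "real (n2 - n1) *\<^sub>R \<gamma> k
      = (\<Sum>s\<in>S. real_of_int (\<lfloor>real n2 * a s\<rfloor> - \<lfloor>real n1 * a s\<rfloor>) *\<^sub>R \<gamma> s)"
  proof -
    have "q n2 - q n1 = 0" using eq0 unfolding pq .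
    then have "real n2 *\<^sub>R \<gamma> k - real n1 *\<^sub>R \<gamma> k
        = (\<Sum>s\<in>S. real_of_int \<lfloor>real n2 * a s\<rfloor> *\<^sub>R \<gamma> s) - (\<Sum>s\<in>S. real_of_int \<lfloor>real n1 * a s\<rfloor> *\<^sub>R \<gamma> s)"
      unfolding q_def by (simp add: algebra_simps)
    moreover have "real n2 *\<^sub>R \<gamma> k - real n1 *\<^sub>R \<gamma> k = real (n2 - n1) *\<^sub>R \<gamma> k"
      using n12 by (simp add: of_nat_diff scaleR_diff_left)
    ultimately show ?thesis
      by (simp only: of_int_diff scaleR_diff_left sum_subtractf)
  qed
  have "real (n2 - n1) *\<^sub>R \<gamma> k \<in> zspan \<gamma> S"
    unfolding zspan_def
    by (rule CollectI, rule exI[of _ "\<lambda>s. \<lfloor>real n2 * a s\<rfloor> - \<lfloor>real n1 * a s\<rfloor>"], rule conjI[OF E TrueI])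
  moreover have "n2 - n1 > 0" using n12 by simp
  ultimately show ?thesis by blast
qed

lemma root_of_dual:
  fixes \<gamma> :: "'m::finite \<Rightarrow> real^'d"
  assumes N: "real N *\<^sub>R \<gamma> k \<in> M" and phi: "\<phi> \<in> dual_group M"
  shows "(torus_elt \<gamma> \<phi> $ k) ^ N = 1"
proof -
  have "\<phi> \<bullet> (real N *\<^sub>R \<gamma> k) \<in> \<int>" using phi N unfolding dual_group_def by blast
  then have I: "real N * (\<gamma> k \<bullet> \<phi>) \<in> \<int>" by (simp only: inner_scaleR_right inner_commute[of \<phi>])
  have "(torus_elt \<gamma> \<phi> $ k) ^ N = exp (2 * of_real pi * \<i> * of_real (\<gamma> k \<bullet> \<phi>)) ^ N"
    unfolding torus_elt_def by (simp only: vec_lambda_beta)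
  also have "\<dots> = exp (of_nat N * (2 * of_real pi * \<i> * of_real (\<gamma> k \<bullet> \<phi>)))"
    by (rule exp_of_nat_mult[symmetric])
  also have "of_nat N * (2 * of_real pi * \<i> * of_real (\<gamma> k \<bullet> \<phi>)) =
      2 * of_real pi * \<i> * (of_real (real N * (\<gamma> k \<bullet> \<phi>)) :: complex)"
    by (simp add: algebra_simps)
  also have "exp \<dots> = 1" using I by (simp only: exp_2pi_eq_1_iff)
  finally show ?thesis .
qed

lemma finite_stab:
  fixes \<gamma> :: "'m::finite \<Rightarrow> real^'d"
  assumes "\<forall>k. \<exists>N>0. real N *\<^sub>R \<gamma> k \<in> LLz \<gamma> z"
  shows "finite (torus_elt \<gamma> ` dual_group (LLz \<gamma> z))"
proof -
  from choice[OF assms] obtain N where N: "\<And>k. N k > 0" "\<And>k. real (N k) *\<^sub>R \<gamma> k \<in> LLz \<gamma> z"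
    by blast
  have sub: "torus_elt \<gamma> ` dual_group (LLz \<gamma> z) \<subseteq>
      (\<lambda>f. \<chi> k. f k) ` (Pi\<^sub>E UNIV (\<lambda>k. {w::complex. w ^ (N k) = 1}))"
  proof
    fix t assume "t \<in> torus_elt \<gamma> ` dual_group (LLz \<gamma> z)"
    then obtain \<phi> where phi: "\<phi> \<in> dual_group (LLz \<gamma> z)" "t = torus_elt \<gamma> \<phi>" by blast
    have mem: "(\<lambda>k. t $ k) \<in> Pi\<^sub>E UNIV (\<lambda>k. {w::complex. w ^ (N k) = 1})"
    proof -
      have r: "(t $ k) ^ (N k) = 1" for k
        unfolding phi(2) by (rule root_of_dual[where \<gamma>=\<gamma> and k=k and N="N k", OF N(2)[of k] phi(1)])
      show ?thesis unfolding PiE_UNIV_domain by (rule Pi_I) (simp add: r)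
    qed
    show "t \<in> (\<lambda>f. \<chi> k. f k) ` (Pi\<^sub>E UNIV (\<lambda>k. {w::complex. w ^ (N k) = 1}))"
      by (rule image_eqI[where x="\<lambda>k. t $ k"]) (simp, rule mem)
  qed
  have "finite (Pi\<^sub>E (UNIV::'m set) (\<lambda>k. {w::complex. w ^ (N k) = 1}))"
  proof (rule finite_PiE)
    fix k show "finite {w::complex. w ^ (N k) = 1}"
      by (rule finite_roots_unity) (use N(1)[of k] in linarith)
  qed simp
  then show ?thesis using sub by (rule finite_subset[OF _ finite_imageI, rotated])
qed

theorem lemma5p4:
  fixes \<gamma> :: "'m::finite \<Rightarrow> real^'d" and \<delta> :: "real^'d"
  assumes "is_lattice_of_rank (LL \<gamma>) CARD('d)"
  shows "(\<forall>z\<in>ZZ \<gamma> \<delta>. stabiliser \<gamma> z = torus_elt \<gamma> ` dual_group (LLz \<gamma> z)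
            \<and> {\<phi>. torus_elt \<gamma> \<phi> \<in> stabiliser \<gamma> z} = dual_group (LLz \<gamma> z))
         \<and> {\<phi>. torus_elt \<gamma> \<phi> = (\<chi> k. 1)} = dual_group (LL \<gamma>)
         \<and> (nondegenerate \<gamma> \<delta> \<longrightarrow> (\<forall>z\<in>ZZ \<gamma> \<delta>. finite (stabiliser \<gamma> z)))"
proof (intro conjI ballI impI)
  fix z show "stabiliser \<gamma> z = torus_elt \<gamma> ` dual_group (LLz \<gamma> z)" by (rule stab_eq(1))
next
  fix z show "{\<phi>. torus_elt \<gamma> \<phi> \<in> stabiliser \<gamma> z} = dual_group (LLz \<gamma> z)" by (rule stab_eq(2))
next
  show "{\<phi>. torus_elt \<gamma> \<phi> = (\<chi> k. 1)} = dual_group (LL \<gamma>)" using triv_iff[of \<gamma>] by blast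
next
  fix z assume nd: "nondegenerate \<gamma> \<delta>" and z: "z \<in> ZZ \<gamma> \<delta>"
  have sp: "\<forall>c. (\<forall>k\<in>{i. z $ i \<noteq> 0}. c \<bullet> \<gamma> k = 0) \<longrightarrow> c = 0"
  proof (intro allI impI)
    fix c assume "\<forall>k\<in>{i. z $ i \<noteq> 0}. c \<bullet> \<gamma> k = 0"
    then have "\<forall>k. z $ k \<noteq> 0 \<longrightarrow> c \<bullet> \<gamma> k = 0" by blast
    then show "c = 0" by (rule nondeg_indep[OF nd z])
  qed
  have "\<forall>k. \<exists>N>0. real N *\<^sub>R \<gamma> k \<in> LLz \<gamma> z"
    unfolding LLz_def using rat_multiple[OF assms sp] by blast
  then have "finite (torus_elt \<gamma> ` dual_group (LLz \<gamma> z))" by (rule finite_stab)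
  then show "finite (stabiliser \<gamma> z)" by (simp only: stab_eq(1))
qed

end
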